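(* Suppose all populations share the same finite strategy set $S\subset[0,1]$, with minimum $s_{\min}$ and maximum $s_{\max}$, and assume $\frac{\lambda d(1-s)}{\gamma}\ge1$ for all $s\in S$ and all $d\in\{1,\dots,D\}$. For $d\in\{1,\dots,D\}$, $\Theta\in[0,1]$ and $s\in[s_{\min},s_{\max}]$ define $$\mathcal{F}^d(s;\Theta)=s\,r-(1-s)\frac{\lambda d(1-s)\Theta}{\gamma+\lambda d(1-s)\Theta}.$$ If $$|r|\ge 1-\frac{1}{\bigl(1+\frac{\lambda d(1-s_{\min})}{\gamma}\bigr)^2}\qquad\text{for all } d\in\{1,\dots,D\},$$ then $s_{\min}$ is a dominant strategy for every population: for all $d$, all $\Theta\in[0,1]$ and all $s\in[s_{\min},s_{\max}]$, $\mathcal{F}^d(s_{\min};\Theta)\ge\mathcal{F}^d(s;\Theta)$.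
   Context: Constants: $\lambda>0$ (contagion rate), $\gamma>0$ (recovery rate), relative reward $r<0$, degrees $d\in\{1,\dots,D\}$. $\mathcal{F}^d(s;\Theta)$ is the (continuous extension of the) payoff of a degree-$d$ player choosing social-inactivity level $s$ when the broadcast link-infection probability is $\Theta$, the perceived infection probability being the steady-state value $\frac{\lambda d(1-s)\Theta}{\gamma+\lambda d(1-s)\Theta}$. *)

theory Defs
  imports Complex_Main
begin

text \<open>Payoff of a degree-d player choosing social-inactivity level s when the
broadcast link-infection probability is Theta (continuous extension, with
steady-state perceived infection probability).\<close>
definition payoff :: "real \<Rightarrow> real \<Rightarrow> real \<Rightarrow> nat \<Rightarrow> real \<Rightarrow> real \<Rightarrow> real" where
  "payoff lam gam r d s Theta =
     s * r - (1 - s) * ((lam * real d * (1 - s) * Theta) / (gam + lam * real d * (1 - s) * Theta))"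

end

theory Submission
  imports Defs
begin

lemma key:
  fixes g k X x L R :: real
  assumes g: "g > 0" and k: "k \<ge> 0" and x0: "0 \<le> x" and xX: "x \<le> X" and kL: "k \<le> L"
    and R: "R \<ge> 1 - 1 / (1 + L * X / g)^2"
  shows "R * (X - x) \<ge> X * (k * X / (g + k * X)) - x * (k * x / (g + k * x))"
proof -
  have X0: "X \<ge> 0" using x0 xX by linarith
  define P where "P = (g + k*X) * (g + k*x)"
  have p1: "g + k*X > 0" using g k X0 by (simp add: add_pos_nonneg)
  have p2: "g + k*x > 0" using g k x0 by (simp add: add_pos_nonneg)
  have Ppos: "P > 0" unfolding P_def using p1 p2 by simp
  have e1: "X * (k * X / (g + k * X)) - x * (k * x / (g + k * x)) = (X - x) * (1 - g^2 / P)"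
    unfolding P_def using p1 p2 by (simp add: divide_simps power2_eq_square) algebra
  have "k*X \<le> L*X" using kL X0 by (simp add: mult_right_mono)
  moreover have "k*x \<le> L*X" using kL x0 xX k by (meson mult_mono order_trans order_refl)
  ultimately have PL: "P \<le> (g + L*X)^2" unfolding P_def power2_eq_square
    using p1 p2 by (intro mult_mono) auto
  have "1 / (1 + L * X / g)^2 = g^2 / (g + L*X)^2" using g
    by (simp add: field_simps power2_eq_square)
  moreover have "g^2 / (g + L*X)^2 \<le> g^2 / P"
    proof (rule divide_left_mono)
    show "0 < (g + L * X)^2 * P" using PL Ppos by (intro mult_pos_pos) linarith+
  qed (use PL in auto)
  ultimately have "R \<ge> 1 - g^2/P" using R by linarith
  hence "R * (X - x) \<ge> (1 - g^2/P) * (X - x)" using xX by (intro mult_right_mono) auto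
  thus ?thesis using e1 by (simp add: mult.commute)
qed

theorem theorem5:
  fixes lam gam r :: real and D :: nat and S :: "real set"
  assumes lam_pos: "lam > 0" and gam_pos: "gam > 0" and r_neg: "r < 0"
    and S_fin: "finite S" and S_ne: "S \<noteq> {}" and S_sub: "S \<subseteq> {0..1}"
    and hS: "\<forall>s\<in>S. \<forall>d\<in>{1..D}. lam * real d * (1 - s) / gam \<ge> 1"
    and hr: "\<forall>d\<in>{1..D}. \<bar>r\<bar> \<ge> 1 - 1 / (1 + lam * real d * (1 - Min S) / gam)^2"
  shows "\<forall>d\<in>{1..D}. \<forall>Theta\<in>{0..1}. \<forall>s\<in>{Min S..Max S}.
           payoff lam gam r d (Min S) Theta \<ge> payoff lam gam r d s Theta"
proof (intro ballI)
  fix d Theta s assume d: "d \<in> {1..D}" and T: "Theta \<in> {0..(1::real)}" and s: "s \<in> {Min S..Max S}"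
  have "Max S \<in> S" "Min S \<in> S" using S_fin S_ne by auto
  hence mx: "Max S \<le> 1" "Min S \<ge> 0" using S_sub by auto
  define k where "k = lam * real d * Theta"
  have k0: "k \<ge> 0" using lam_pos T unfolding k_def by simp
  have kL: "k \<le> lam * real d" using lam_pos T unfolding k_def
    by (simp add: mult_left_le)
  have K: "\<bar>r\<bar> * ((1 - Min S) - (1 - s)) \<ge>
     (1 - Min S) * (k * (1 - Min S) / (gam + k * (1 - Min S))) - (1 - s) * (k * (1 - s) / (gam + k * (1 - s)))"
    using key[OF gam_pos k0 _ _ kL, of "1 - s" "1 - Min S" "\<bar>r\<bar>"] s mx hr d by auto
  have e: "\<And>t. lam * real d * (1 - t) * Theta = k * (1 - t)" unfolding k_def by simp
  show "payoff lam gam r d (Min S) Theta \<ge> payoff lam gam r d s Theta"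
    unfolding payoff_def e using K r_neg by (simp add: algebra_simps)
qed

end
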